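(* For every $\theta>1/3$ there is a constant $C(\theta)<\infty$ such that for every cubic polynomial $p(x)=x^3+ex^2+fx+g$ with $e,f,g\in\mathbb R$, $$\sum_{m\in\mathbb Z}\frac{1}{\langle p(m)\rangle^{\theta}}\le C(\theta).$$
   Context: $\langle x\rangle:=1+|x|$. *)

theory Defs
  imports "HOL-Analysis.Analysis"
begin

definition jbr :: "real \<Rightarrow> real" where
  "jbr x = 1 + \<bar>x\<bar>"

end

theory Submission
  imports Defs "HOL-Analysis.Analysis"
begin
lemma frac_aux: fixes a b c D :: real shows "c \<noteq> 0 \<Longrightarrow> D = b * c \<Longrightarrow> a / b = a * c / D"
  by simp
lemma ddiff:
  fixes x0 x1 x2 x3 e f g :: real
  assumes "x0 \<noteq> x1" "x0 \<noteq> x2" "x0 \<noteq> x3" "x1 \<noteq> x2" "x1 \<noteq> x3" "x2 \<noteq> x3"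
  shows "(x0^3+e*x0^2+f*x0+g)/((x0-x1)*(x0-x2)*(x0-x3)) + (x1^3+e*x1^2+f*x1+g)/((x1-x0)*(x1-x2)*(x1-x3))
       + (x2^3+e*x2^2+f*x2+g)/((x2-x0)*(x2-x1)*(x2-x3)) + (x3^3+e*x3^2+f*x3+g)/((x3-x0)*(x3-x1)*(x3-x2)) = 1"
proof -
  define p where "p = (\<lambda>x::real. x^3+e*x^2+f*x+g)"
  define D where "D = (x0-x1)*(x0-x2)*(x0-x3)*(x1-x2)*(x1-x3)*(x2-x3)"
  have D: "D \<noteq> 0" using assms by (simp add: D_def)
  have t0: "p x0/((x0-x1)*(x0-x2)*(x0-x3)) = p x0 * ((x1-x2)*(x1-x3)*(x2-x3)) / D"
    by (rule frac_aux) (use assms in \<open>auto simp: D_def\<close>)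
  have t1: "p x1/((x1-x0)*(x1-x2)*(x1-x3)) = p x1 * (-((x0-x2)*(x0-x3)*(x2-x3))) / D"
    by (rule frac_aux, (use assms in simp), (simp only: D_def), algebra)
  have t2: "p x2/((x2-x0)*(x2-x1)*(x2-x3)) = p x2 * ((x0-x1)*(x0-x3)*(x1-x3)) / D"
    by (rule frac_aux, (use assms in simp), (simp only: D_def), algebra)
  have t3: "p x3/((x3-x0)*(x3-x1)*(x3-x2)) = p x3 * (-((x0-x1)*(x0-x2)*(x1-x2))) / D"
    by (rule frac_aux, (use assms in simp), (simp only: D_def), algebra)
  have key: "p x0 * ((x1-x2)*(x1-x3)*(x2-x3)) + p x1 * (-((x0-x2)*(x0-x3)*(x2-x3)))
     + p x2 * ((x0-x1)*(x0-x3)*(x1-x3)) + p x3 * (-((x0-x1)*(x0-x2)*(x1-x2))) = D"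
    unfolding p_def D_def by algebra
  have "p x0/((x0-x1)*(x0-x2)*(x0-x3)) + p x1/((x1-x0)*(x1-x2)*(x1-x3)) + p x2/((x2-x0)*(x2-x1)*(x2-x3))
     + p x3/((x3-x0)*(x3-x1)*(x3-x2)) = D / D"
    unfolding t0 t1 t2 t3 key[symmetric] by (simp only: add_divide_distrib)
  then show ?thesis using D by (simp add: p_def)
qed

lemma sorted_gap:
  fixes xs :: "int list"
  assumes "sorted_wrt (<) xs" "i \<le> j" "j < length xs"
  shows "xs ! j - xs ! i \<ge> int (j - i)"
  using assms(2,3)
proof (induction j)
  case 0 then show ?case by simp
next
  case (Suc j)
  show ?case
  proof (cases "i = Suc j")
    case True then show ?thesis by simp
  next
    case False
    then have "i \<le> j" using Suc by simp
    then have "xs ! j - xs ! i \<ge> int (j - i)" using Suc by simp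
    moreover have "xs ! j < xs ! Suc j" using assms(1) Suc.prems
      by (simp add: sorted_wrt_iff_nth_less)
    ultimately show ?thesis using \<open>i \<le> j\<close> by linarith
  qed
qed

lemma prod_lb:
  fixes a b c K :: real
  assumes "K > 0" "\<bar>a\<bar> \<ge> K" "\<bar>b\<bar> \<ge> 2*K" "\<bar>c\<bar> \<ge> K"
  shows "\<bar>a*b*c\<bar> \<ge> 2*K^3"
proof -
  have "K * (2*K) * K \<le> \<bar>a\<bar> * \<bar>b\<bar> * \<bar>c\<bar>"
    using assms by (intro mult_mono) auto
  then show ?thesis by (simp add: abs_mult power3_eq_cube mult_ac)
qed

lemma term_ub:
  fixes P w K T :: real
  assumes "K > 0" "\<bar>P\<bar> \<le> T" "\<bar>w\<bar> \<ge> 2*K^3"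
  shows "\<bar>P / w\<bar> \<le> T / (2*K^3)"
proof -
  have "0 < 2*K^3" using assms by simp
  have "\<bar>P / w\<bar> = \<bar>P\<bar> / \<bar>w\<bar>" by simp
  also have "\<dots> \<le> T / (2*K^3)"
    using assms \<open>0 < 2*K^3\<close> by (intro frac_le) auto
  finally show ?thesis .
qed

lemma count_bound:
  fixes G :: "int set" and e f g T :: real and k :: nat
  assumes fin: "finite G" and bnd: "\<And>m. m \<in> G \<Longrightarrow> \<bar>(of_int m)^3 + e*(of_int m)^2 + f * of_int m + g\<bar> \<le> T"
    and card: "card G \<ge> 3*k+1"
  shows "real k ^ 3 \<le> 2 * T"
proof (cases "k = 0")
  case True
  have "G \<noteq> {}" using card by auto
  then obtain m where "m \<in> G" by auto
  from bnd[OF this] have "T \<ge> 0" by linarith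
  then show ?thesis using True by simp
next
  case False
  define K where "K = real k"
  have K: "K > 0" using False by (simp add: K_def)
  define xs where "xs = sorted_list_of_set G"
  have sw: "sorted_wrt (<) xs" unfolding xs_def by (rule strict_sorted_list_of_set)
  have len: "length xs = card G" unfolding xs_def by simp
  have setxs: "set xs = G" unfolding xs_def using fin by simp
  define y where "y = (\<lambda>i. real_of_int (xs ! (i*k)))"
  have yin: "\<And>i. i \<le> 3 \<Longrightarrow> xs ! (i*k) \<in> G"
  proof -
    fix i :: nat assume "i \<le> 3"
    then have "i*k \<le> 3*k" by simp
    then have "i*k < length xs" using len card by linarith
    then show "xs ! (i*k) \<in> G" using setxs nth_mem by blast
  qed
  have gap: "\<And>i j. i \<le> j \<Longrightarrow> j \<le> 3 \<Longrightarrow> y j - y i \<ge> real (j - i) * K"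
  proof -
    fix i j :: nat assume ij: "i \<le> j" "j \<le> 3"
    have "j*k \<le> 3*k" using ij by simp
    then have "j*k < length xs" using len card by linarith
    then have "xs ! (j*k) - xs ! (i*k) \<ge> int (j*k - i*k)"
      using ij by (intro sorted_gap sw) auto
    moreover have "j*k - i*k = (j - i) * k" by (simp add: diff_mult_distrib)
    ultimately have "real_of_int (xs ! (j*k) - xs ! (i*k)) \<ge> real ((j - i) * k)"
      by (metis of_int_le_iff of_int_of_nat_eq)
    then show "y j - y i \<ge> real (j - i) * K" by (simp add: y_def K_def)
  qed
  have g01: "y 1 - y 0 \<ge> K" using gap[of 0 1] by simp
  have g12: "y 2 - y 1 \<ge> K" using gap[of 1 2] by simp
  have g23: "y 3 - y 2 \<ge> K" using gap[of 2 3] by simp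
  define p where "p = (\<lambda>x::real. x^3 + e*x^2 + f*x + g)"
  have pb: "\<And>i. i \<le> 3 \<Longrightarrow> \<bar>p (y i)\<bar> \<le> T"
    unfolding p_def y_def using bnd yin by blast
  have dd: "p (y 0)/((y 0-y 1)*(y 0-y 2)*(y 0-y 3)) + p (y 1)/((y 1-y 0)*(y 1-y 2)*(y 1-y 3))
       + p (y 2)/((y 2-y 0)*(y 2-y 1)*(y 2-y 3)) + p (y 3)/((y 3-y 0)*(y 3-y 1)*(y 3-y 2)) = 1"
    unfolding p_def by (rule ddiff) (use K g01 g12 g23 in linarith)+
  have a0: "\<bar>p (y 0)/((y 0-y 1)*(y 0-y 2)*(y 0-y 3))\<bar> \<le> T / (2*K^3)"
    by (intro term_ub K pb prod_lb) (use K g01 g12 g23 in \<open>auto simp: abs_if\<close>)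
  have a1: "\<bar>p (y 1)/((y 1-y 0)*(y 1-y 2)*(y 1-y 3))\<bar> \<le> T / (2*K^3)"
  proof -
    have "(y 1-y 0)*(y 1-y 2)*(y 1-y 3) = (y 1-y 0)*(y 1-y 3)*(y 1-y 2)" by simp
    then show ?thesis
    by (simp only:) (intro term_ub K pb prod_lb, (use K g01 g12 g23 in \<open>auto simp: abs_if\<close>))
  qed
  have a2: "\<bar>p (y 2)/((y 2-y 0)*(y 2-y 1)*(y 2-y 3))\<bar> \<le> T / (2*K^3)"
  proof -
    have "(y 2-y 0)*(y 2-y 1)*(y 2-y 3) = (y 2-y 1)*(y 2-y 0)*(y 2-y 3)" by simp
    then show ?thesis
    by (simp only:) (intro term_ub K pb prod_lb, (use K g01 g12 g23 in \<open>auto simp: abs_if\<close>))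
  qed
  have a3: "\<bar>p (y 3)/((y 3-y 0)*(y 3-y 1)*(y 3-y 2))\<bar> \<le> T / (2*K^3)"
  proof -
    have "(y 3-y 0)*(y 3-y 1)*(y 3-y 2) = (y 3-y 0)*(y 3-y 1)*(y 3-y 2)" by simp
    then show ?thesis
    by (intro term_ub K pb prod_lb) (use K g01 g12 g23 in \<open>auto simp: abs_if\<close>)
  qed
  have "1 \<le> 4 * (T / (2*K^3))" using dd a0 a1 a2 a3 by linarith
  then have "2*K^3 \<le> 4*T" using K by (simp add: field_simps)
  then show ?thesis by (simp add: K_def)
qed


definition gg :: "real \<Rightarrow> nat \<Rightarrow> real" where
  "gg \<theta> n = 1 / (1 + real (n div 3) ^ 3 / 2) powr \<theta>"

lemma gg_nonneg: "gg \<theta> n \<ge> 0"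
  unfolding gg_def by simp

lemma gg_summable:
  assumes "\<theta> > 1/3"
  shows "summable (gg \<theta>)"
proof (rule summable_comparison_test')
  show "summable (\<lambda>n. 432 powr \<theta> * real n powr (-(3*\<theta>)))"
    using assms by (intro summable_mult) (simp add: summable_real_powr_iff)
  fix n :: nat assume n: "n \<ge> 4"
  have d: "real (n div 3) \<ge> real n / 6"
  proof -
    have "3 * (n div 3) + 2 \<ge> n" by linarith
    then have "real (3 * (n div 3)) + 2 \<ge> real n" by linarith
    then show ?thesis using n by simp
  qed
  have np: "real n > 0" using n by simp
  have "real n ^ 3 / 432 = (real n / 6) ^ 3 / 2" by (simp add: power_divide)
  also have "\<dots> \<le> real (n div 3) ^ 3 / 2"
    using d np by (intro divide_right_mono power_mono) auto
  also have "\<dots> \<le> 1 + real (n div 3) ^ 3 / 2" by simp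
  finally have le: "real n ^ 3 / 432 \<le> 1 + real (n div 3) ^ 3 / 2" .
  have th: "\<theta> \<ge> 0" using assms by simp
  have pos: "real n ^ 3 / 432 > 0" using np by simp
  have "(real n ^ 3 / 432) powr \<theta> \<le> (1 + real (n div 3) ^ 3 / 2) powr \<theta>"
    using le pos th by (intro powr_mono2) auto
  then have "gg \<theta> n \<le> 1 / (real n ^ 3 / 432) powr \<theta>"
    unfolding gg_def using pos by (intro divide_left_mono mult_pos_pos) auto
  also have "\<dots> = 432 powr \<theta> * real n powr (-(3*\<theta>))"
  proof -
    have e1: "(real n ^ 3 / 432) powr \<theta> = (real n ^ 3) powr \<theta> / 432 powr \<theta>"
      using np by (simp add: powr_divide)
    have e2: "real n ^ 3 = real n powr (real 3)"
      using np by (rule powr_realpow[symmetric])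
    have e3: "(real n powr (real 3)) powr \<theta> = real n powr (3*\<theta>)"
      by (simp only: powr_powr of_nat_numeral)
    have e4: "real n powr (-(3*\<theta>)) = 1 / real n powr (3*\<theta>)"
      by (simp add: powr_minus divide_inverse)
    have p1: "real n powr (3*\<theta>) > 0" using np by simp
    have p2: "(432::real) powr \<theta> > 0" by simp
    have "1 / (real n ^ 3 / 432) powr \<theta> = 1 / (real n powr (3*\<theta>) / 432 powr \<theta>)"
      by (subst e1) (simp only: e2 e3)
    also have "\<dots> = 432 powr \<theta> * (1 / real n powr (3*\<theta>))"
      using p1 p2 by simp
    finally show ?thesis by (simp only: e4)
  qed
  finally show "norm (gg \<theta> n) \<le> 432 powr \<theta> * real n powr (-(3*\<theta>))"
    using gg_nonneg[of \<theta> n] by simp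
qed

lemma fin_bound:
  fixes e f g \<theta> :: real
  assumes th: "\<theta> \<ge> 0"
  shows "finite F \<Longrightarrow> card F = n \<Longrightarrow>
    (\<Sum>m\<in>F. 1 / (jbr (of_int m ^ 3 + e * of_int m ^ 2 + f * of_int m + g)) powr \<theta>) \<le> (\<Sum>i<n. gg \<theta> i)"
proof (induction n arbitrary: F)
  case 0 then show ?case by simp
next
  case (Suc n)
  define q where "q = (\<lambda>m::int. \<bar>(of_int m)^3 + e*(of_int m)^2 + f * of_int m + g\<bar>)"
  define w where "w = (\<lambda>m::int. 1 / (jbr (of_int m ^ 3 + e * of_int m ^ 2 + f * of_int m + g)) powr \<theta>)"
  have wq: "\<And>m. w m = 1 / (1 + q m) powr \<theta>" by (simp add: w_def q_def jbr_def)
  have ne: "F \<noteq> {}" using Suc.prems by auto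
  define M where "M = Max (q ` F)"
  have "M \<in> q ` F" unfolding M_def using Suc.prems ne by (intro Max_in) auto
  then obtain m where m: "m \<in> F" "q m = M" by auto
  have mx: "\<And>x. x \<in> F \<Longrightarrow> q x \<le> q m" unfolding m(2) M_def using Suc.prems by (intro Max_ge) auto
  have "card F \<ge> 3 * (n div 3) + 1" using Suc.prems by linarith
  then have cb: "real (n div 3) ^ 3 \<le> 2 * q m"
    by (intro count_bound[of F e f g]) (use Suc.prems mx in \<open>auto simp: q_def\<close>)
  have q0: "q m \<ge> 0" by (simp add: q_def)
  have gp: "1 + real (n div 3) ^ 3 / 2 > 0" by (simp add: add_pos_nonneg)
  have "(1 + real (n div 3) ^ 3 / 2) powr \<theta> \<le> (1 + q m) powr \<theta>"
    using cb th by (intro powr_mono2) auto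
  then have wm: "w m \<le> gg \<theta> n"
    unfolding wq gg_def by (intro divide_left_mono mult_pos_pos) (use q0 gp in auto)
  have "sum w F = w m + sum w (F - {m})" using Suc.prems m(1) by (simp add: sum.remove)
  also have "sum w (F - {m}) \<le> (\<Sum>i<n. gg \<theta> i)"
    unfolding w_def using Suc.prems m(1) by (intro Suc.IH) auto
  finally have "sum w F \<le> (\<Sum>i<Suc n. gg \<theta> i)" using wm by simp
  then show ?case by (simp add: w_def)
qed

theorem lemma3p2:
  fixes \<theta> :: real
  assumes "\<theta> > 1/3"
  shows "\<exists>C::real. \<forall>e f g :: real.
           (\<lambda>m::int. 1 / (jbr (of_int m ^ 3 + e * of_int m ^ 2 + f * of_int m + g)) powr \<theta>) summable_on UNIV
         \<and> (\<Sum>\<^sub>\<infinity>m::int. 1 / (jbr (of_int m ^ 3 + e * of_int m ^ 2 + f * of_int m + g)) powr \<theta>) \<le> C"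
proof (intro exI allI)
  fix e f g :: real
  define w where "w = (\<lambda>m::int. 1 / (jbr (of_int m ^ 3 + e * of_int m ^ 2 + f * of_int m + g)) powr \<theta>)"
  have th: "\<theta> \<ge> 0" using assms by simp
  have S: "summable (gg \<theta>)" using gg_summable[OF assms] .
  have fb: "\<And>F. finite F \<Longrightarrow> sum w F \<le> suminf (gg \<theta>)"
  proof -
    fix F :: "int set" assume "finite F"
    then have "sum w F \<le> (\<Sum>i<card F. gg \<theta> i)"
      unfolding w_def using fin_bound[OF th] by blast
    also have "\<dots> \<le> suminf (gg \<theta>)"
      using S by (intro sum_le_suminf) (auto simp: gg_nonneg)
    finally show "sum w F \<le> suminf (gg \<theta>)" .
  qed
  have w0: "\<And>m. w m \<ge> 0" unfolding w_def by simp
  have sm: "w summable_on UNIV"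
    by (rule nonneg_bounded_partial_sums_imp_summable_on[where C="suminf (gg \<theta>)"])
       (use w0 fb in \<open>auto intro!: always_eventually simp: eventually_finite_subsets_at_top_weakI\<close>)
  have "infsum w UNIV \<le> suminf (gg \<theta>)"
    using sm fb by (intro infsum_le_finite_sums) auto
  then show "w summable_on UNIV \<and> infsum w UNIV \<le> suminf (gg \<theta>)" using sm by simp
qed

end
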